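(* Let $C$ be an $n\times n$ matrix of non-negative integers, and let $m\neq n$. Suppose: - all entries in the first $m$ rows of $C$ are non-zero; - all entries in the last $n-m$ rows of $C$ are zero; - at least one entry of $C$ equals $1$. Then there is an $(n+2)\times(n+2)$ integer matrix $D=(d_{il})$ such that: (i) the last $(n+2)-(m+2)$ rows of $D$ are identically zero; (ii) every entry in the first $m+2$ rows of $D$ is strictly positive; (iii) $d_{i1}=1$ for all $1\le i\le m+2$; (iv) the top-left $(m+2)\times(m+2)$ corner of $D$ has determinant zero; (v) $J_{nm}+C\sim_M J_{(n+2)(m+2)}+D$.
   Context: $J_{nm}$ ($0\le m\le n$) is the $n\times n$ matrix whose $i$-th row, for $i\le m$, has a $1$ in position $i$ and $0$ elsewhere, and whose last $n-m$ rows consist entirely of $\infty$. Arithmetic convention: $\infty+a=\infty$. For an $X\times X$ matrix $A$ with entries in $\{0,1,2,\dots\}\cup\{\infty\}$, $G_A$ is the graph with vertex set $X$ and exactly $A(x,y)$ edges from $x$ to $y$. For matrices, $A\sim_M B$ means $G_A\sim_M G_B$. A graph may have multiple edges and loops. A source receives no edges, a sink emits no edges, and an infinite emitter emits infinitely many edges. A vertex is singular if it is a sink or infinite emitter, and regular otherwise. Move-equivalence $\sim_M$ is the smallest equivalence relation on graphs with finitely many vertices such that $G\sim_M E$ whenever $E$ is isomorphic to a graph obtained from $G$ by one of the following moves. (S) Delete a regular source together with the edges it emits. (R) For a regular vertex $u$ emitting exactly one edge $f$, with $r(f)\neq u$, and all of whose incoming edges have the same source $v$: delete $u$, $f$ and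 the edges into $u$, and add for each $e\in r^{-1}(u)$ an edge $[ef]$ from $v$ to $r(f)$. (O) Out-splitting at a non-sink $v$ along a partition $\mathcal E_1,\dots,\mathcal E_n$ of $s^{-1}(v)$ with at most one infinite part. Replace $v$ by $v^1,\dots,v^n$. Each edge $e$ into $v$ becomes copies $e^1,\dots,e^n$ with $r(e^i)=v^i$ and source $s(e)$, or source $v^j$ if $s(e)=v$ and $e\in\mathcal E_j$. An edge from $v$ to $w\neq v$ lying in $\mathcal E_i$ gets source $v^i$. (I) In-splitting at a regular non-source $v$ along a partition $\mathcal E_1,\dots,\mathcal E_n$ of $r^{-1}(v)$. Replace $v$ by $v^1,\dots,v^n$. Each edge $e$ out of $v$ becomes copies $e^1,\dots,e^n$ with $s(e^i)=v^i$ and range $r(e)$, or range $v^j$ if $r(e)=v$ and $e\in\mathcal E_j$. An edge into $v$ from $w\neq v$ lying in $\mathcal E_i$ gets range $v^i$. *)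

theory Defs
  imports "Jordan_Normal_Form.Determinant" "HOL-Library.Nat_Bijection" "HOL-Library.Extended_Nat"
begin

record ('v, 'e) dgraph =
  verts :: "'v set"
  edges :: "'e set"
  src   :: "'e \<Rightarrow> 'v"
  rng   :: "'e \<Rightarrow> 'v"

definition wf_graph :: "('v, 'e) dgraph \<Rightarrow> bool" where
  "wf_graph G \<longleftrightarrow> finite (verts G) \<and>
     (\<forall>e\<in>edges G. src G e \<in> verts G \<and> rng G e \<in> verts G)"

definition out_edges :: "('v, 'e) dgraph \<Rightarrow> 'v \<Rightarrow> 'e set" where
  "out_edges G v = {e\<in>edges G. src G e = v}"

definition in_edges :: "('v, 'e) dgraph \<Rightarrow> 'v \<Rightarrow> 'e set" where
  "in_edges G v = {e\<in>edges G. rng G e = v}"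

definition is_source :: "('v, 'e) dgraph \<Rightarrow> 'v \<Rightarrow> bool" where
  "is_source G v \<longleftrightarrow> in_edges G v = {}"

definition is_sink :: "('v, 'e) dgraph \<Rightarrow> 'v \<Rightarrow> bool" where
  "is_sink G v \<longleftrightarrow> out_edges G v = {}"

definition is_inf_emitter :: "('v, 'e) dgraph \<Rightarrow> 'v \<Rightarrow> bool" where
  "is_inf_emitter G v \<longleftrightarrow> infinite (out_edges G v)"

definition is_regular :: "('v, 'e) dgraph \<Rightarrow> 'v \<Rightarrow> bool" where
  "is_regular G v \<longleftrightarrow> \<not> is_sink G v \<and> \<not> is_inf_emitter G v"

definition graph_iso :: "('v, 'e) dgraph \<Rightarrow> ('w, 'f) dgraph \<Rightarrow> bool" where
  "graph_iso G H \<longleftrightarrow> (\<exists>\<phi> \<psi>. bij_betw \<phi> (verts G) (verts H) \<and> bij_betw \<psi> (edges G) (edges H) \<and>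
     (\<forall>e\<in>edges G. src H (\<psi> e) = \<phi> (src G e) \<and> rng H (\<psi> e) = \<phi> (rng G e)))"

definition move_S_graph :: "('v, 'e) dgraph \<Rightarrow> 'v \<Rightarrow> ('v, 'e) dgraph" where
  "move_S_graph G v = \<lparr>verts = verts G - {v}, edges = edges G - out_edges G v,
                        src = src G, rng = rng G\<rparr>"

definition move_S_ok :: "('v, 'e) dgraph \<Rightarrow> 'v \<Rightarrow> bool" where
  "move_S_ok G v \<longleftrightarrow> v \<in> verts G \<and> is_regular G v \<and> is_source G v"

text \<open>(R) reduction at u with unique outgoing edge f; incoming edges all from v.
  Edge Inl e is an old edge, Inr e is the new edge [ef].\<close>
definition move_R_graph :: "('v, 'e) dgraph \<Rightarrow> 'v \<Rightarrow> 'e \<Rightarrow> 'v \<Rightarrow> ('v, 'e + 'e) dgraph" where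
  "move_R_graph G u f v = \<lparr>verts = verts G - {u},
     edges = Inl ` (edges G - {f} - in_edges G u) \<union> Inr ` in_edges G u,
     src = (\<lambda>x. case x of Inl e \<Rightarrow> src G e | Inr e \<Rightarrow> v),
     rng = (\<lambda>x. case x of Inl e \<Rightarrow> rng G e | Inr e \<Rightarrow> rng G f)\<rparr>"

definition move_R_ok :: "('v, 'e) dgraph \<Rightarrow> 'v \<Rightarrow> 'e \<Rightarrow> 'v \<Rightarrow> bool" where
  "move_R_ok G u f v \<longleftrightarrow> u \<in> verts G \<and> v \<in> verts G \<and> is_regular G u \<and>
     out_edges G u = {f} \<and> rng G f \<noteq> u \<and> (\<forall>e\<in>in_edges G u. src G e = v)"

text \<open>(O) out-splitting at v along the partition of the out-edges of v into the
  parts {e. p e = i}, i = 1..k.  New vertex Inl w is the old w (w ~= v),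
  Inr i is v^i.  Edge Inl e is an old edge not entering v, Inr (e,i) is e^i.\<close>
definition out_split_graph :: "('v, 'e) dgraph \<Rightarrow> 'v \<Rightarrow> nat \<Rightarrow> ('e \<Rightarrow> nat) \<Rightarrow> ('v + nat, 'e + 'e \<times> nat) dgraph" where
  "out_split_graph G v k p =
    (let s' = (\<lambda>e. if src G e = v then Inr (p e) else Inl (src G e)) in
     \<lparr>verts = Inl ` (verts G - {v}) \<union> Inr ` {1..k},
      edges = Inl ` (edges G - in_edges G v) \<union> (\<lambda>(e,i). Inr (e,i)) ` (in_edges G v \<times> {1..k}),
      src = (\<lambda>x. case x of Inl e \<Rightarrow> s' e | Inr (e,i) \<Rightarrow> s' e),
      rng = (\<lambda>x. case x of Inl e \<Rightarrow> Inl (rng G e) | Inr (e,i) \<Rightarrow> Inr i)\<rparr>)"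

definition out_split_ok :: "('v, 'e) dgraph \<Rightarrow> 'v \<Rightarrow> nat \<Rightarrow> ('e \<Rightarrow> nat) \<Rightarrow> bool" where
  "out_split_ok G v k p \<longleftrightarrow> v \<in> verts G \<and> \<not> is_sink G v \<and> 1 \<le> k \<and>
     (\<forall>e\<in>out_edges G v. p e \<in> {1..k}) \<and>
     (\<forall>i\<in>{1..k}. {e\<in>out_edges G v. p e = i} \<noteq> {}) \<and>
     (\<forall>i\<in>{1..k}. \<forall>j\<in>{1..k}. infinite {e\<in>out_edges G v. p e = i} \<and>
         infinite {e\<in>out_edges G v. p e = j} \<longrightarrow> i = j)"

text \<open>(I) in-splitting at v along the partition of the in-edges of v into the
  parts {e. p e = i}, i = 1..k.  Edge Inl e is an old edge not leaving v,
  Inr (e,i) is e^i.\<close>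
definition in_split_graph :: "('v, 'e) dgraph \<Rightarrow> 'v \<Rightarrow> nat \<Rightarrow> ('e \<Rightarrow> nat) \<Rightarrow> ('v + nat, 'e + 'e \<times> nat) dgraph" where
  "in_split_graph G v k p =
    (let r' = (\<lambda>e. if rng G e = v then Inr (p e) else Inl (rng G e)) in
     \<lparr>verts = Inl ` (verts G - {v}) \<union> Inr ` {1..k},
      edges = Inl ` (edges G - out_edges G v) \<union> (\<lambda>(e,i). Inr (e,i)) ` (out_edges G v \<times> {1..k}),
      src = (\<lambda>x. case x of Inl e \<Rightarrow> Inl (src G e) | Inr (e,i) \<Rightarrow> Inr i),
      rng = (\<lambda>x. case x of Inl e \<Rightarrow> r' e | Inr (e,i) \<Rightarrow> r' e)\<rparr>)"

definition in_split_ok :: "('v, 'e) dgraph \<Rightarrow> 'v \<Rightarrow> nat \<Rightarrow> ('e \<Rightarrow> nat) \<Rightarrow> bool" where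
  "in_split_ok G v k p \<longleftrightarrow> v \<in> verts G \<and> is_regular G v \<and> \<not> is_source G v \<and> 1 \<le> k \<and>
     (\<forall>e\<in>in_edges G v. p e \<in> {1..k}) \<and>
     (\<forall>i\<in>{1..k}. {e\<in>in_edges G v. p e = i} \<noteq> {})"

text \<open>One move step between graphs with finitely many vertices (vertices and
  edges are represented in nat; every graph considered has countably many edges).\<close>
definition move_step :: "(nat, nat) dgraph \<Rightarrow> (nat, nat) dgraph \<Rightarrow> bool" where
  "move_step G E \<longleftrightarrow> wf_graph G \<and> wf_graph E \<and>
     ((\<exists>v. move_S_ok G v \<and> graph_iso E (move_S_graph G v)) \<or>
      (\<exists>u f v. move_R_ok G u f v \<and> graph_iso E (move_R_graph G u f v)) \<or>
      (\<exists>v k p. out_split_ok G v k p \<and> graph_iso E (out_split_graph G v k p)) \<or>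
      (\<exists>v k p. in_split_ok G v k p \<and> graph_iso E (in_split_graph G v k p)))"

definition move_equiv :: "(nat, nat) dgraph \<Rightarrow> (nat, nat) dgraph \<Rightarrow> bool" where
  "move_equiv = (\<lambda>G E. move_step G E \<or> move_step E G)\<^sup>*\<^sup>*"

text \<open>G_A for an N x N matrix A (indices 0..N-1) with entries in nat \<union> {\<infinity>}:
  exactly A x y edges from x to y (countably infinitely many if A x y = \<infinity>).\<close>
definition graph_of_matrix :: "nat \<Rightarrow> (nat \<Rightarrow> nat \<Rightarrow> enat) \<Rightarrow> (nat, nat) dgraph" where
  "graph_of_matrix N A =
     \<lparr>verts = {0..<N},
      edges = {prod_encode (x, prod_encode (y, k)) | x y k. x < N \<and> y < N \<and> enat k < A x y},
      src = (\<lambda>e. fst (prod_decode e)),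
      rng = (\<lambda>e. fst (prod_decode (snd (prod_decode e))))\<rparr>"

text \<open>J_{nm} (0-based indices): row i < m has 1 at position i and 0 elsewhere,
  rows m..n-1 are entirely \<infinity>.\<close>
definition Jmat :: "nat \<Rightarrow> nat \<Rightarrow> nat \<Rightarrow> nat \<Rightarrow> enat" where
  "Jmat n m i j = (if i < m then (if i = j then 1 else 0) else \<infinity>)"

end

theory Submission
  imports Defs "HOL-Library.Countable_Set"
begin


definition ecard :: "'a set \<Rightarrow> enat" where
  "ecard S = (if finite S then enat (card S) else \<infinity>)"

definition ecnt :: "('v,'e) dgraph \<Rightarrow> 'v \<Rightarrow> 'v \<Rightarrow> enat" where
  "ecnt G x y = ecard {e\<in>edges G. src G e = x \<and> rng G e = y}"

lemma ecard_image: "inj_on f S \<Longrightarrow> ecard (f ` S) = ecard S"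
  unfolding ecard_def by (auto simp: card_image dest: finite_imageD)

lemma ecard_lt: "ecard {k::nat. enat k < a} = a"
proof (cases a)
  case (enat n) then show ?thesis by (simp add: ecard_def)
next
  case infinity
  then show ?thesis by (simp add: ecard_def)
qed

lemma ecard_eq_bij:
  assumes "countable A" "countable B" "ecard A = ecard B"
  shows "\<exists>f. bij_betw f A B"
proof (cases "finite A")
  case True
  then have "finite B" "card A = card B" using assms(3) by (auto simp: ecard_def split: if_splits)
  then show ?thesis using True by (metis finite_same_card_bij)
next
  case False
  then have "infinite B" using assms(3) by (auto simp: ecard_def split: if_splits)
  obtain e where e: "bij_betw e A (UNIV::nat set)" using countableE_infinite[OF assms(1) False] by blast
  obtain g where g: "bij_betw g (UNIV :: nat set) B" using countable_infiniteE'[OF assms(2) \<open>infinite B\<close>] by blast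
  have "bij_betw (g \<circ> e) A B" using e g by (rule bij_betw_trans)
  then show ?thesis by blast
qed

lemma iso_by_cnt:
  fixes G :: "('v,'e::countable) dgraph" and H :: "('w,'f::countable) dgraph"
  assumes wG: "wf_graph G" and wH: "wf_graph H"
    and phi: "bij_betw \<phi> (verts G) (verts H)"
    and cnt: "\<And>x y. x \<in> verts G \<Longrightarrow> y \<in> verts G \<Longrightarrow> ecnt G x y = ecnt H (\<phi> x) (\<phi> y)"
  shows "graph_iso G H"
proof -
  define EG where "EG x y = {e\<in>edges G. src G e = x \<and> rng G e = y}" for x y
  define EH where "EH x y = {e\<in>edges H. src H e = x \<and> rng H e = y}" for x y
  have ex: "\<exists>f. bij_betw f (EG x y) (EH (\<phi> x) (\<phi> y))" if "x \<in> verts G" "y \<in> verts G" for x y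
    by (rule ecard_eq_bij) (use cnt[OF that] in \<open>auto simp: EG_def EH_def ecnt_def\<close>)
  define F where "F x y = (SOME f. bij_betw f (EG x y) (EH (\<phi> x) (\<phi> y)))" for x y
  have F: "bij_betw (F x y) (EG x y) (EH (\<phi> x) (\<phi> y))" if "x \<in> verts G" "y \<in> verts G" for x y
    unfolding F_def using someI_ex[OF ex[OF that]] .
  define \<psi> where "\<psi> e = F (src G e) (rng G e) e" for e
  have inG: "src G e \<in> verts G" "rng G e \<in> verts G" if "e \<in> edges G" for e
    using wG that by (auto simp: wf_graph_def)
  have inH: "src H e \<in> verts H" "rng H e \<in> verts H" if "e \<in> edges H" for e
    using wH that by (auto simp: wf_graph_def)
  have psi_in: "\<psi> e \<in> EH (\<phi> (src G e)) (\<phi> (rng G e))" if "e \<in> edges G" for e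
  proof -
    have "e \<in> EG (src G e) (rng G e)" using that by (auto simp: EG_def)
    then show ?thesis unfolding \<psi>_def using F[OF inG[OF that]] by (auto simp: bij_betw_def)
  qed
  have "bij_betw \<psi> (edges G) (edges H)"
    unfolding bij_betw_def
  proof
    show "inj_on \<psi> (edges G)"
    proof (rule inj_onI)
      fix a b assume a: "a \<in> edges G" and b: "b \<in> edges G" and eq: "\<psi> a = \<psi> b"
      have "\<phi> (src G a) = \<phi> (src G b)" "\<phi> (rng G a) = \<phi> (rng G b)"
        using psi_in[OF a] psi_in[OF b] eq by (auto simp: EH_def)
      then have s: "src G a = src G b" and r: "rng G a = rng G b"
        using phi inG[OF a] inG[OF b] by (auto simp: bij_betw_def inj_on_def)
      have "a \<in> EG (src G a) (rng G a)" "b \<in> EG (src G a) (rng G a)"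
        using a b s r by (auto simp: EG_def)
      moreover have "F (src G a) (rng G a) a = F (src G a) (rng G a) b"
        using eq s r by (simp add: \<psi>_def)
      ultimately show "a = b" using F[OF inG[OF a]] by (auto simp: bij_betw_def inj_on_def)
    qed
  next
    show "\<psi> ` edges G = edges H"
    proof
      show "\<psi> ` edges G \<subseteq> edges H" using psi_in by (auto simp: EH_def)
    next
      show "edges H \<subseteq> \<psi> ` edges G"
      proof
        fix h assume h: "h \<in> edges H"
        obtain x where x: "x \<in> verts G" "\<phi> x = src H h"
          using inH[OF h] phi by (metis bij_betw_def imageE)
        obtain y where y: "y \<in> verts G" "\<phi> y = rng H h"
          using inH[OF h] phi by (metis bij_betw_def imageE)
        have "h \<in> EH (\<phi> x) (\<phi> y)" using h x y by (auto simp: EH_def)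
        then obtain e where e: "e \<in> EG x y" "F x y e = h"
          using F[OF x(1) y(1)] unfolding bij_betw_def by (metis imageE)
        then have "e \<in> edges G" "\<psi> e = h" by (auto simp: EG_def \<psi>_def)
        then show "h \<in> \<psi> ` edges G" by blast
      qed
    qed
  qed
  moreover have "\<forall>e\<in>edges G. src H (\<psi> e) = \<phi> (src G e) \<and> rng H (\<psi> e) = \<phi> (rng G e)"
    using psi_in by (auto simp: EH_def)
  ultimately show ?thesis unfolding graph_iso_def using phi by blast
qed


definition enc :: "nat \<Rightarrow> nat \<Rightarrow> nat \<Rightarrow> nat" where
  "enc x y k = prod_encode (x, prod_encode (y, k))"

lemma enc_inj: "enc x y k = enc x' y' k' \<longleftrightarrow> x = x' \<and> y = y' \<and> k = k'"
  unfolding enc_def by (metis prod_encode_eq prod.inject)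

abbreviation gm :: "nat \<Rightarrow> (nat \<Rightarrow> nat \<Rightarrow> enat) \<Rightarrow> (nat, nat) dgraph" where
  "gm \<equiv> graph_of_matrix"

lemma gm_simps:
  "verts (gm N A) = {0..<N}"
  "edges (gm N A) = {enc x y k | x y k. x < N \<and> y < N \<and> enat k < A x y}"
  "src (gm N A) (enc x y k) = x"
  "rng (gm N A) (enc x y k) = y"
  unfolding graph_of_matrix_def enc_def by (simp_all add: prod_encode_inverse)

lemma wf_gm: "wf_graph (gm N A)"
  unfolding wf_graph_def by (auto simp: gm_simps)

lemma gm_E: "x < N \<Longrightarrow> y < N \<Longrightarrow>
  {e\<in>edges (gm N A). src (gm N A) e = x \<and> rng (gm N A) e = y} = enc x y ` {k. enat k < A x y}"
  by (auto simp: gm_simps)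

lemma inj_enc: "inj_on (enc x y) S"
  by (auto intro!: inj_onI simp: enc_inj)

lemma ecnt_gm: "x < N \<Longrightarrow> y < N \<Longrightarrow> ecnt (gm N A) x y = A x y"
  unfolding ecnt_def by (simp add: gm_E ecard_image[OF inj_enc] ecard_lt)

definition part :: "enat \<Rightarrow> enat \<Rightarrow> nat \<Rightarrow> nat" where
  "part c1 c2 k = (if c1 = \<infinity> \<and> c2 = \<infinity> then (if even k then 1 else 2)
     else if c1 = \<infinity> then (if enat k < c2 then 2 else 1) else (if enat k < c1 then 1 else 2))"

lemma part_12: "part c1 c2 k \<in> {1..2}"
  unfolding part_def by auto

lemma infinite_even: "infinite {k::nat. even k}"
  unfolding infinite_nat_iff_unbounded
proof
  fix m :: nat show "\<exists>n>m. n \<in> {k. even k}" by (rule exI[of _ "2*m+2"]) auto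
qed

lemma infinite_odd: "infinite {k::nat. odd k}"
proof -
  have "Suc ` {k. even k} \<subseteq> {k. odd k}" by auto
  moreover have "infinite (Suc ` {k::nat. even k})" using infinite_even by (simp add: finite_image_iff)
  ultimately show ?thesis using finite_subset by blast
qed

lemma ecard_part1: "ecard {k. enat k < c1 + c2 \<and> part c1 c2 k = 1} = c1"
proof (cases c1)
  case (enat a)
  have le: "enat a \<le> enat a + c2" by (cases c2) auto
  have "{k. enat k < c1 + c2 \<and> part c1 c2 k = 1} = {k. enat k < c1}"
  proof (rule equalityI; rule subsetI)
    fix x assume "x \<in> {k. enat k < c1 + c2 \<and> part c1 c2 k = 1}"
    then show "x \<in> {k. enat k < c1}" using enat by (auto simp: part_def split: if_splits)
  next
    fix x assume "x \<in> {k. enat k < c1}"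
    then have "enat x < enat a" using enat by simp
    then have "enat x < c1 + c2" using le enat order_less_le_trans by metis
    then show "x \<in> {k. enat k < c1 + c2 \<and> part c1 c2 k = 1}"
      using enat \<open>enat x < enat a\<close> by (simp add: part_def)
  qed
  then show ?thesis by (simp add: ecard_lt)
next
  case infinity
  show ?thesis
  proof (cases c2)
    case (enat b)
    have "{b..} \<subseteq> {k. enat k < c1 + c2 \<and> part c1 c2 k = 1}"
      using infinity enat by (auto simp: part_def)
    then have "infinite {k. enat k < c1 + c2 \<and> part c1 c2 k = 1}"
      using infinite_Ici finite_subset by blast
    then show ?thesis using infinity by (simp add: ecard_def)
  next
    case infinity2: infinity
    have "{k. even k} \<subseteq> {k. enat k < c1 + c2 \<and> part c1 c2 k = 1}"
      using infinity infinity2 by (auto simp: part_def)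
    then have "infinite {k. enat k < c1 + c2 \<and> part c1 c2 k = 1}"
      using infinite_even finite_subset by blast
    then show ?thesis using infinity by (simp add: ecard_def)
  qed
qed


lemma ecard_part2: "ecard {k. enat k < c1 + c2 \<and> part c1 c2 k = 2} = c2"
proof (cases c1)
  case (enat a)
  show ?thesis
  proof (cases c2)
    case (enat b)
    have "{k. enat k < c1 + c2 \<and> part c1 c2 k = 2} = {a..<a+b}"
      using \<open>c1 = enat a\<close> enat by (auto simp: part_def split: if_splits)
    then show ?thesis using enat by (simp add: ecard_def)
  next
    case infinity
    have "{a..} \<subseteq> {k. enat k < c1 + c2 \<and> part c1 c2 k = 2}"
      using \<open>c1 = enat a\<close> infinity by (auto simp: part_def)
    then have "infinite {k. enat k < c1 + c2 \<and> part c1 c2 k = 2}"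
      using infinite_Ici finite_subset by blast
    then show ?thesis using infinity by (simp add: ecard_def)
  qed
next
  case infinity
  show ?thesis
  proof (cases c2)
    case (enat b)
    have "{k. enat k < c1 + c2 \<and> part c1 c2 k = 2} = {k. enat k < c2}"
      using infinity enat by (auto simp: part_def)
    then show ?thesis by (simp add: ecard_lt)
  next
    case infinity2: infinity
    have "{k. odd k} \<subseteq> {k. enat k < c1 + c2 \<and> part c1 c2 k = 2}"
      using infinity infinity2 by (auto simp: part_def)
    then have "infinite {k. enat k < c1 + c2 \<and> part c1 c2 k = 2}"
      using infinite_odd finite_subset by blast
    then show ?thesis using infinity2 by (simp add: ecard_def)
  qed
qed

lemma ecard_part:
  "i \<in> {1..2} \<Longrightarrow> ecard {k. enat k < c1 + c2 \<and> part c1 c2 k = i} = (if i = 1 then c1 else c2)"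
  using ecard_part1 ecard_part2 by (auto simp: le_Suc_eq numeral_2_eq_2)


definition EG :: "('v,'e) dgraph \<Rightarrow> 'v \<Rightarrow> 'v \<Rightarrow> 'e set" where
  "EG G a b = {e\<in>edges G. src G e = a \<and> rng G e = b}"

lemma ecnt_EG: "ecnt G a b = ecard (EG G a b)" by (simp add: ecnt_def EG_def)

lemma out_simps:
  "verts (out_split_graph G v k p) = Inl ` (verts G - {v}) \<union> Inr ` {1..k}"
  "edges (out_split_graph G v k p) = Inl ` (edges G - in_edges G v) \<union> (\<lambda>(e,i). Inr (e,i)) ` (in_edges G v \<times> {1..k})"
  "src (out_split_graph G v k p) (Inl e) = (if src G e = v then Inr (p e) else Inl (src G e))"
  "src (out_split_graph G v k p) (Inr (e,i)) = (if src G e = v then Inr (p e) else Inl (src G e))"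
  "rng (out_split_graph G v k p) (Inl e) = Inl (rng G e)"
  "rng (out_split_graph G v k p) (Inr (e,i)) = Inr i"
  by (simp_all add: out_split_graph_def Let_def)

lemma in_simps:
  "verts (in_split_graph G v k p) = Inl ` (verts G - {v}) \<union> Inr ` {1..k}"
  "edges (in_split_graph G v k p) = Inl ` (edges G - out_edges G v) \<union> (\<lambda>(e,i). Inr (e,i)) ` (out_edges G v \<times> {1..k})"
  "src (in_split_graph G v k p) (Inl e) = Inl (src G e)"
  "src (in_split_graph G v k p) (Inr (e,i)) = Inr i"
  "rng (in_split_graph G v k p) (Inl e) = (if rng G e = v then Inr (p e) else Inl (rng G e))"
  "rng (in_split_graph G v k p) (Inr (e,i)) = (if rng G e = v then Inr (p e) else Inl (rng G e))"
  by (simp_all add: in_split_graph_def Let_def)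

lemma out_EG1: "a \<noteq> v \<Longrightarrow> b \<noteq> v \<Longrightarrow> EG (out_split_graph G v k p) (Inl a) (Inl b) = Inl ` EG G a b"
  by (auto simp: EG_def out_simps in_edges_def split: if_splits)
lemma out_EG2: "a \<noteq> v \<Longrightarrow> j \<in> {1..k} \<Longrightarrow> EG (out_split_graph G v k p) (Inl a) (Inr j) = (\<lambda>e. Inr (e,j)) ` EG G a v"
  by (auto simp: EG_def out_simps in_edges_def split: if_splits)
lemma out_EG3: "b \<noteq> v \<Longrightarrow> EG (out_split_graph G v k p) (Inr i) (Inl b) = Inl ` {e\<in>EG G v b. p e = i}"
  by (auto simp: EG_def out_simps in_edges_def split: if_splits)
lemma out_EG4: "j \<in> {1..k} \<Longrightarrow> EG (out_split_graph G v k p) (Inr i) (Inr j) = (\<lambda>e. Inr (e,j)) ` {e\<in>EG G v v. p e = i}"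
  by (auto simp: EG_def out_simps in_edges_def split: if_splits)

lemma in_EG1: "a \<noteq> v \<Longrightarrow> b \<noteq> v \<Longrightarrow> EG (in_split_graph G v k p) (Inl a) (Inl b) = Inl ` EG G a b"
  by (auto simp: EG_def in_simps out_edges_def split: if_splits)
lemma in_EG2: "b \<noteq> v \<Longrightarrow> i \<in> {1..k} \<Longrightarrow> EG (in_split_graph G v k p) (Inr i) (Inl b) = (\<lambda>e. Inr (e,i)) ` EG G v b"
  by (auto simp: EG_def in_simps out_edges_def split: if_splits)
lemma in_EG3: "a \<noteq> v \<Longrightarrow> EG (in_split_graph G v k p) (Inl a) (Inr j) = Inl ` {e\<in>EG G a v. p e = j}"
  by (auto simp: EG_def in_simps out_edges_def split: if_splits)
lemma in_EG4: "i \<in> {1..k} \<Longrightarrow> EG (in_split_graph G v k p) (Inr i) (Inr j) = (\<lambda>e. Inr (e,i)) ` {e\<in>EG G v v. p e = j}"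
  by (auto simp: EG_def in_simps out_edges_def split: if_splits)

lemma wf_out:
  assumes "wf_graph G" "v \<in> verts G" "\<forall>e\<in>out_edges G v. p e \<in> {1..k}"
  shows "wf_graph (out_split_graph G v k p)"
  using assms unfolding wf_graph_def
  by (auto simp: out_simps in_edges_def out_edges_def split: if_splits)

lemma wf_in:
  assumes "wf_graph G" "v \<in> verts G" "\<forall>e\<in>in_edges G v. p e \<in> {1..k}"
  shows "wf_graph (in_split_graph G v k p)"
  using assms unfolding wf_graph_def
  by (auto simp: in_simps in_edges_def out_edges_def split: if_splits)

definition pout :: "(nat \<Rightarrow> enat) \<Rightarrow> (nat \<Rightarrow> enat) \<Rightarrow> nat \<Rightarrow> nat" where
  "pout R1 R2 e = (let y = fst (prod_decode (snd (prod_decode e))); k = snd (prod_decode (snd (prod_decode e)))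
     in part (R1 y) (R2 y) k)"

definition pin :: "(nat \<Rightarrow> enat) \<Rightarrow> (nat \<Rightarrow> enat) \<Rightarrow> nat \<Rightarrow> nat" where
  "pin C1 C2 e = (let x = fst (prod_decode e); k = snd (prod_decode (snd (prod_decode e)))
     in part (C1 x) (C2 x) k)"

lemma pout_12: "pout R1 R2 e \<in> {1..2}" unfolding pout_def Let_def by (rule part_12)
lemma pout_12': "Suc 0 \<le> pout R1 R2 e" "pout R1 R2 e \<le> 2" using pout_12[of R1 R2 e] by auto
lemma pin_12: "pin C1 C2 e \<in> {1..2}" unfolding pin_def Let_def by (rule part_12)

lemma pin_12': "Suc 0 \<le> pin C1 C2 e" "pin C1 C2 e \<le> 2" using pin_12[of C1 C2 e] by auto

lemma pout_enc[simp]: "pout R1 R2 (enc x y k) = part (R1 y) (R2 y) k"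
  by (simp add: pout_def enc_def prod_encode_inverse)

lemma pin_enc[simp]: "pin C1 C2 (enc x y k) = part (C1 x) (C2 x) k"
  by (simp add: pin_def enc_def prod_encode_inverse)

lemma EG_gm: "x < N \<Longrightarrow> y < N \<Longrightarrow> EG (gm N A) x y = enc x y ` {k. enat k < A x y}"
  by (simp add: EG_def gm_E)

lemma EG_gm_p: "x < N \<Longrightarrow> y < N \<Longrightarrow>
   {e \<in> EG (gm N A) x y. p e = i} = enc x y ` {k. enat k < A x y \<and> p (enc x y k) = i}"
  by (auto simp: EG_gm)

definition outM :: "nat \<Rightarrow> nat \<Rightarrow> (nat \<Rightarrow> nat \<Rightarrow> enat) \<Rightarrow> (nat \<Rightarrow> enat) \<Rightarrow> (nat \<Rightarrow> enat) \<Rightarrow> nat \<Rightarrow> nat \<Rightarrow> enat" where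
  "outM N v A R1 R2 i j = (let oj = (if j = N then v else j) in
     if i = v then R1 oj else if i = N then R2 oj else A i oj)"

definition inM :: "nat \<Rightarrow> nat \<Rightarrow> (nat \<Rightarrow> nat \<Rightarrow> enat) \<Rightarrow> (nat \<Rightarrow> enat) \<Rightarrow> (nat \<Rightarrow> enat) \<Rightarrow> nat \<Rightarrow> nat \<Rightarrow> enat" where
  "inM N v A C1 C2 i j = (let oi = (if i = N then v else i) in
     if j = v then C1 oi else if j = N then C2 oi else A oi j)"

definition phiS :: "nat \<Rightarrow> nat \<Rightarrow> nat \<Rightarrow> nat + nat" where
  "phiS N v i = (if i = v then Inr 1 else if i = N then Inr 2 else Inl i)"

lemma phiS_bij: "v < N \<Longrightarrow> bij_betw (phiS N v) {0..<Suc N} (Inl ` ({0..<N} - {v}) \<union> Inr ` {1..2})"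
  unfolding bij_betw_def
proof
  assume v: "v < N"
  show "inj_on (phiS N v) {0..<Suc N}"
    by (rule inj_onI) (auto simp: phiS_def split: if_splits)
  show "phiS N v ` {0..<Suc N} = Inl ` ({0..<N} - {v}) \<union> Inr ` {1..2}"
  proof
    show "phiS N v ` {0..<Suc N} \<subseteq> Inl ` ({0..<N} - {v}) \<union> Inr ` {1..2}"
      using v by (auto simp: phiS_def)
  next
    show "Inl ` ({0..<N} - {v}) \<union> Inr ` {1..2} \<subseteq> phiS N v ` {0..<Suc N}"
    proof
      fix z :: "nat + nat" assume z: "z \<in> Inl ` ({0..<N} - {v}) \<union> Inr ` {1..2}"
      show "z \<in> phiS N v ` {0..<Suc N}"
      proof (cases z)
        case (Inl a)
        then have "a < N" "a \<noteq> v" using z by auto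
        then have "phiS N v a = z" using Inl by (simp add: phiS_def)
        then show ?thesis using \<open>a < N\<close> by force
      next
        case (Inr b)
        then have "b = 1 \<or> b = 2" using z by auto
        then show ?thesis
        proof
          assume "b = 1" then have "phiS N v v = z" using Inr by (simp add: phiS_def)
          then show ?thesis using v by force
        next
          assume "b = 2" then have "phiS N v N = z" using Inr v by (simp add: phiS_def)
          then show ?thesis by force
        qed
      qed
    qed
  qed
qed


lemma ecard_Inl: "ecard (Inl ` S) = ecard S" by (rule ecard_image) (auto intro: inj_onI)
lemma ecard_Inr: "ecard ((\<lambda>e. Inr (e,j)) ` S) = ecard S" by (rule ecard_image) (auto intro: inj_onI)

lemma ecard_gm_p:
  assumes "x < N" "y < N" "A x y = c1 + c2" "i \<in> {1..2}" "\<And>k. p (enc x y k) = part c1 c2 k"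
  shows "ecard {e \<in> EG (gm N A) x y. p e = i} = (if i = 1 then c1 else c2)"
  using assms by (simp add: EG_gm_p ecard_image[OF inj_enc] ecard_part)

lemma out_cnt:
  assumes v: "v < N" and sum: "\<forall>y<N. A v y = R1 y + R2 y" and i: "i < Suc N" and j: "j < Suc N"
  shows "ecnt (out_split_graph (gm N A) v 2 (pout R1 R2)) (phiS N v i) (phiS N v j) = outM N v A R1 R2 i j"
proof -
  have c1: "(1::nat) \<in> {1..2}" and c2: "(2::nat) \<in> {1..2}" by auto
  consider "i = v" | "i = N" | "i \<noteq> v \<and> i \<noteq> N" by blast
  then show ?thesis
  proof cases
    case 1
    consider "j = v" | "j = N" | "j \<noteq> v \<and> j \<noteq> N" by blast
    then show ?thesis
    proof cases
      case 1 with \<open>i = v\<close> v show ?thesis using sum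
        by (simp add: ecnt_EG phiS_def out_EG4 out_EG4 ecard_Inr ecard_gm_p outM_def)
    next
      case 2 with \<open>i = v\<close> v show ?thesis using sum
        by (simp add: ecnt_EG phiS_def out_EG4 ecard_Inr ecard_gm_p outM_def)
    next
      case 3 with \<open>i = v\<close> v j show ?thesis using sum
        by (simp add: ecnt_EG phiS_def out_EG3 ecard_Inl ecard_gm_p outM_def)
    qed
  next
    case 2
    consider "j = v" | "j = N" | "j \<noteq> v \<and> j \<noteq> N" by blast
    then show ?thesis
    proof cases
      case 1 with \<open>i = N\<close> v show ?thesis using sum
        by (simp add: ecnt_EG phiS_def out_EG4 ecard_Inr ecard_gm_p outM_def)
    next
      case 2 with \<open>i = N\<close> v show ?thesis using sum
        by (simp add: ecnt_EG phiS_def out_EG4 ecard_Inr ecard_gm_p outM_def)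
    next
      case 3 with \<open>i = N\<close> v j show ?thesis using sum
        by (simp add: ecnt_EG phiS_def out_EG3 ecard_Inl ecard_gm_p outM_def)
    qed
  next
    case 3
    then have iN: "i < N" using i by auto
    consider "j = v" | "j = N" | "j \<noteq> v \<and> j \<noteq> N" by blast
    then show ?thesis
    proof cases
      case 1 with 3 iN v show ?thesis
        by (simp add: ecnt_EG phiS_def out_EG2 ecard_Inr EG_gm ecard_image[OF inj_enc] ecard_lt outM_def)
    next
      case 2 with 3 iN v show ?thesis
        by (simp add: ecnt_EG phiS_def out_EG2 ecard_Inr EG_gm ecard_image[OF inj_enc] ecard_lt outM_def)
    next
      case 4: 3
      then have "j < N" using j by auto
      with 3 4 iN v show ?thesis
        by (simp add: ecnt_EG phiS_def out_EG1 ecard_Inl EG_gm ecard_image[OF inj_enc] ecard_lt outM_def)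
    qed
  qed
qed


lemma in_cnt:
  assumes v: "v < N" and sum: "\<forall>x<N. A x v = C1 x + C2 x" and i: "i < Suc N" and j: "j < Suc N"
  shows "ecnt (in_split_graph (gm N A) v 2 (pin C1 C2)) (phiS N v i) (phiS N v j) = inM N v A C1 C2 i j"
proof -
  have c1: "(1::nat) \<in> {1..2}" and c2: "(2::nat) \<in> {1..2}" by auto
  consider "i = v" | "i = N" | "i \<noteq> v \<and> i \<noteq> N" by blast
  then show ?thesis
  proof cases
    case 1
    consider "j = v" | "j = N" | "j \<noteq> v \<and> j \<noteq> N" by blast
    then show ?thesis
    proof cases
      case 1 with \<open>i = v\<close> v show ?thesis using sum
        by (simp add: ecnt_EG phiS_def in_EG4 ecard_Inr ecard_gm_p inM_def)
    next
      case 2 with \<open>i = v\<close> v show ?thesis using sum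
        by (simp add: ecnt_EG phiS_def in_EG4 ecard_Inr ecard_gm_p inM_def)
    next
      case 3 with \<open>i = v\<close> v j show ?thesis
        by (simp add: ecnt_EG phiS_def in_EG2 ecard_Inr EG_gm ecard_image[OF inj_enc] ecard_lt inM_def)
    qed
  next
    case 2
    consider "j = v" | "j = N" | "j \<noteq> v \<and> j \<noteq> N" by blast
    then show ?thesis
    proof cases
      case 1 with \<open>i = N\<close> v show ?thesis using sum
        by (simp add: ecnt_EG phiS_def in_EG4 ecard_Inr ecard_gm_p inM_def)
    next
      case 2 with \<open>i = N\<close> v show ?thesis using sum
        by (simp add: ecnt_EG phiS_def in_EG4 ecard_Inr ecard_gm_p inM_def)
    next
      case 3 with \<open>i = N\<close> v j show ?thesis
        by (simp add: ecnt_EG phiS_def in_EG2 ecard_Inr EG_gm ecard_image[OF inj_enc] ecard_lt inM_def)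
    qed
  next
    case 3
    then have iN: "i < N" using i by auto
    consider "j = v" | "j = N" | "j \<noteq> v \<and> j \<noteq> N" by blast
    then show ?thesis
    proof cases
      case 1 with 3 iN v show ?thesis using sum
        by (simp add: ecnt_EG phiS_def in_EG3 ecard_Inl ecard_gm_p inM_def)
    next
      case 2 with 3 iN v show ?thesis using sum
        by (simp add: ecnt_EG phiS_def in_EG3 ecard_Inl ecard_gm_p inM_def)
    next
      case 4: 3
      then have "j < N" using j by auto
      with 3 4 iN v show ?thesis
        by (simp add: ecnt_EG phiS_def in_EG1 ecard_Inl EG_gm ecard_image[OF inj_enc] ecard_lt inM_def)
    qed
  qed
qed


lemma ecard_empty: "ecard {} = 0" by (simp add: ecard_def zero_enat_def)

lemma out_parts:
  assumes "v < N"
  shows "{e\<in>out_edges (gm N A) v. pout R1 R2 e = i} =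
     (\<Union>y\<in>{0..<N}. enc v y ` {k. enat k < A v y \<and> part (R1 y) (R2 y) k = i})"
  using assms by (auto simp: out_edges_def gm_simps) blast

lemma in_parts:
  assumes "v < N"
  shows "{e\<in>in_edges (gm N A) v. pin C1 C2 e = i} =
     (\<Union>x\<in>{0..<N}. (\<lambda>k. enc x v k) ` {k. enat k < A x v \<and> part (C1 x) (C2 x) k = i})"
  using assms by (auto simp: in_edges_def gm_simps) blast

lemma piece_card:
  assumes "c = c1 + c2" "i \<in> {1..2}" "inj f"
  shows "ecard (f ` {k. enat k < c \<and> part c1 c2 k = i}) = (if i = 1 then c1 else c2)"
  using assms by (simp add: ecard_image[OF inj_on_subset[OF assms(3) subset_UNIV]] ecard_part)

lemma inj_enc1: "inj (enc x y)" using inj_enc by blast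
lemma inj_enc2: "inj (\<lambda>k. enc x y k)" using inj_enc by blast

lemma ecard_ne0: "ecard S \<noteq> 0 \<Longrightarrow> S \<noteq> {}" by (auto simp: ecard_empty)
lemma ecard_fin: "ecard S \<noteq> \<infinity> \<Longrightarrow> finite S" by (auto simp: ecard_def split: if_splits)

lemma out_step:
  assumes v: "v < N" and sum: "\<forall>y<N. A v y = R1 y + R2 y"
    and fin: "(\<forall>y<N. R1 y \<noteq> \<infinity>) \<or> (\<forall>y<N. R2 y \<noteq> \<infinity>)"
    and ne1: "\<exists>y<N. R1 y \<noteq> 0" and ne2: "\<exists>y<N. R2 y \<noteq> 0"
    and sig: "bij_betw \<sigma> {0..<Suc N} {0..<Suc N}"
    and B: "\<forall>i<Suc N. \<forall>j<Suc N. B i j = outM N v A R1 R2 (\<sigma> i) (\<sigma> j)"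
  shows "move_step (gm N A) (gm (Suc N) B)"
proof -
  let ?G = "gm N A" and ?p = "pout R1 R2"
  define PS where "PS i = {e\<in>out_edges ?G v. ?p e = i}" for i
  have PSU: "PS i = (\<Union>y\<in>{0..<N}. enc v y ` {k. enat k < A v y \<and> part (R1 y) (R2 y) k = i})" for i
    unfolding PS_def by (rule out_parts[OF v])
  have pc: "ecard (enc v y ` {k. enat k < A v y \<and> part (R1 y) (R2 y) k = i}) = (if i = 1 then R1 y else R2 y)"
    if "y < N" "i \<in> {1..2}" for y i
    using piece_card[OF _ that(2) inj_enc1] sum that(1) by simp
  have nePS: "PS i \<noteq> {}" if "i \<in> {1..2}" for i
  proof -
    obtain y where y: "y < N" "(if i = 1 then R1 y else R2 y) \<noteq> 0"
      using ne1 ne2 that by (cases "i = 1") auto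
    then have "enc v y ` {k. enat k < A v y \<and> part (R1 y) (R2 y) k = i} \<noteq> {}"
      using pc[OF y(1) that] ecard_ne0 by metis
    then show ?thesis unfolding PSU using y(1) by auto
  qed
  have finPS: "finite (PS i)" if "i \<in> {1..2}" "\<forall>y<N. (if i = 1 then R1 y else R2 y) \<noteq> \<infinity>" for i
    unfolding PSU
  proof (intro finite_UN_I)
    fix y assume "y \<in> {0..<N}"
    then have "ecard (enc v y ` {k. enat k < A v y \<and> part (R1 y) (R2 y) k = i}) \<noteq> \<infinity>"
      using pc[of y i] that by auto
    then show "finite (enc v y ` {k. enat k < A v y \<and> part (R1 y) (R2 y) k = i})" by (rule ecard_fin)
  qed simp
  have ok: "out_split_ok ?G v 2 ?p"
    unfolding out_split_ok_def
  proof (intro conjI ballI impI)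
    show "v \<in> verts ?G" using v by (simp add: gm_simps)
    show "\<not> is_sink ?G v" using nePS[of 1] unfolding is_sink_def PS_def by auto
    show "1 \<le> (2::nat)" by simp
    show "?p e \<in> {1..2}" for e by (rule pout_12)
    show "{e \<in> out_edges ?G v. ?p e = i} \<noteq> {}" if "i \<in> {1..2}" for i using nePS[OF that] by (simp add: PS_def)
    show "i = j" if "i \<in> {1..2}" "j \<in> {1..2}"
      "infinite {e \<in> out_edges ?G v. ?p e = i} \<and> infinite {e \<in> out_edges ?G v. ?p e = j}" for i j
    proof (rule ccontr)
      assume "i \<noteq> j"
      then have "{i,j} = {1,2::nat}" using that(1,2) by auto
      then have "infinite (PS 1)" "infinite (PS 2)" using that(3) unfolding PS_def by (auto simp: doubleton_eq_iff)
      then show False using fin finPS[of 1] finPS[of 2] by auto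
    qed
  qed
  have wfO: "wf_graph (out_split_graph ?G v 2 ?p)"
    by (rule wf_out) (use v in \<open>auto simp: wf_gm gm_simps pout_12'\<close>)
  have bij: "bij_betw (phiS N v \<circ> \<sigma>) (verts (gm (Suc N) B)) (verts (out_split_graph ?G v 2 ?p))"
    using bij_betw_trans[OF sig phiS_bij[OF v]] by (simp add: out_simps gm_simps)
  have iso: "graph_iso (gm (Suc N) B) (out_split_graph ?G v 2 ?p)"
  proof (rule iso_by_cnt[OF wf_gm wfO bij])
    fix x y assume x: "x \<in> verts (gm (Suc N) B)" and y: "y \<in> verts (gm (Suc N) B)"
    then have x': "x < Suc N" and y': "y < Suc N" by (auto simp: gm_simps)
    have "\<sigma> x < Suc N" "\<sigma> y < Suc N" using sig x' y' by (auto simp: bij_betw_def)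
    then show "ecnt (gm (Suc N) B) x y = ecnt (out_split_graph ?G v 2 ?p) ((phiS N v \<circ> \<sigma>) x) ((phiS N v \<circ> \<sigma>) y)"
      using out_cnt[of v N A R1 R2, OF v sum] B x' y' by (simp add: ecnt_gm)
  qed
  show ?thesis unfolding move_step_def using ok iso wf_gm by blast
qed



lemma enat_pos: "(a::enat) \<noteq> 0 \<Longrightarrow> enat 0 < a" by (cases a) (auto simp: zero_enat_def)

lemma out_edges_gm: "v < N \<Longrightarrow> out_edges (gm N A) v = (\<Union>y\<in>{0..<N}. enc v y ` {k. enat k < A v y})"
  by (auto simp: out_edges_def gm_simps) blast

lemma in_step:
  assumes v: "v < N" and fin: "\<forall>y<N. A v y \<noteq> \<infinity>" and nz: "\<exists>y<N. A v y \<noteq> 0"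
    and nsrc: "\<exists>x<N. A x v \<noteq> 0"
    and sum: "\<forall>x<N. A x v = C1 x + C2 x"
    and ne1: "\<exists>x<N. C1 x \<noteq> 0" and ne2: "\<exists>x<N. C2 x \<noteq> 0"
    and sig: "bij_betw \<sigma> {0..<Suc N} {0..<Suc N}"
    and B: "\<forall>i<Suc N. \<forall>j<Suc N. B i j = inM N v A C1 C2 (\<sigma> i) (\<sigma> j)"
  shows "move_step (gm N A) (gm (Suc N) B)"
proof -
  let ?G = "gm N A" and ?p = "pin C1 C2"
  define PS where "PS i = {e\<in>in_edges ?G v. ?p e = i}" for i
  have PSU: "PS i = (\<Union>x\<in>{0..<N}. (\<lambda>k. enc x v k) ` {k. enat k < A x v \<and> part (C1 x) (C2 x) k = i})" for i
    unfolding PS_def by (rule in_parts[OF v])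
  have pc: "ecard ((\<lambda>k. enc x v k) ` {k. enat k < A x v \<and> part (C1 x) (C2 x) k = i}) = (if i = 1 then C1 x else C2 x)"
    if "x < N" "i \<in> {1..2}" for x i
    using piece_card[OF _ that(2) inj_enc2] sum that(1) by simp
  have nePS: "PS i \<noteq> {}" if "i \<in> {1..2}" for i
  proof -
    obtain x where x: "x < N" "(if i = 1 then C1 x else C2 x) \<noteq> 0"
      using ne1 ne2 that by (cases "i = 1") auto
    then have "(\<lambda>k. enc x v k) ` {k. enat k < A x v \<and> part (C1 x) (C2 x) k = i} \<noteq> {}"
      using pc[OF x(1) that] ecard_ne0 by metis
    then show ?thesis unfolding PSU using x(1) by auto
  qed
  have fo: "finite (out_edges ?G v)"
    unfolding out_edges_gm[OF v]
  proof (intro finite_UN_I)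
    fix y assume "y \<in> {0..<N}"
    then have "ecard (enc v y ` {k. enat k < A v y}) \<noteq> \<infinity>"
      using fin by (simp add: ecard_image[OF inj_enc] ecard_lt)
    then show "finite (enc v y ` {k. enat k < A v y})" by (rule ecard_fin)
  qed simp
  have neo: "out_edges ?G v \<noteq> {}"
  proof -
    obtain y where y: "y < N" "A v y \<noteq> 0" using nz by blast
    then have "enat 0 < A v y" using enat_pos by blast
    then have "enc v y 0 \<in> out_edges ?G v" using y v by (auto simp: out_edges_def gm_simps)
    then show ?thesis by blast
  qed
  have nei: "in_edges ?G v \<noteq> {}"
  proof -
    obtain x where x: "x < N" "A x v \<noteq> 0" using nsrc by blast
    then have "enat 0 < A x v" using enat_pos by blast
    then have "enc x v 0 \<in> in_edges ?G v" using x v by (auto simp: in_edges_def gm_simps)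
    then show ?thesis by blast
  qed
  have ok: "in_split_ok ?G v 2 ?p"
    unfolding in_split_ok_def
  proof (intro conjI ballI impI)
    show "v \<in> verts ?G" using v by (simp add: gm_simps)
    show "is_regular ?G v" using fo neo by (simp add: is_regular_def is_sink_def is_inf_emitter_def)
    show "\<not> is_source ?G v" using nei by (simp add: is_source_def)
    show "1 \<le> (2::nat)" by simp
    show "?p e \<in> {1..2}" for e by (rule pin_12)
    show "{e \<in> in_edges ?G v. ?p e = i} \<noteq> {}" if "i \<in> {1..2}" for i using nePS[OF that] by (simp add: PS_def)
  qed
  have wfI: "wf_graph (in_split_graph ?G v 2 ?p)"
    by (rule wf_in) (use v in \<open>auto simp: wf_gm gm_simps pin_12'\<close>)
  have bij: "bij_betw (phiS N v \<circ> \<sigma>) (verts (gm (Suc N) B)) (verts (in_split_graph ?G v 2 ?p))"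
    using bij_betw_trans[OF sig phiS_bij[OF v]] by (simp add: in_simps gm_simps)
  have iso: "graph_iso (gm (Suc N) B) (in_split_graph ?G v 2 ?p)"
  proof (rule iso_by_cnt[OF wf_gm wfI bij])
    fix x y assume x: "x \<in> verts (gm (Suc N) B)" and y: "y \<in> verts (gm (Suc N) B)"
    then have x': "x < Suc N" and y': "y < Suc N" by (auto simp: gm_simps)
    have "\<sigma> x < Suc N" "\<sigma> y < Suc N" using sig x' y' by (auto simp: bij_betw_def)
    then show "ecnt (gm (Suc N) B) x y = ecnt (in_split_graph ?G v 2 ?p) ((phiS N v \<circ> \<sigma>) x) ((phiS N v \<circ> \<sigma>) y)"
      using in_cnt[of v N A C1 C2, OF v sum] B x' y' by (simp add: ecnt_gm)
  qed
  show ?thesis unfolding move_step_def using ok iso wf_gm by blast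
qed


definition sw :: "nat \<Rightarrow> nat \<Rightarrow> nat \<Rightarrow> nat" where
  "sw a b x = (if x = a then b else if x = b then a else x)"

lemma sw_bij: "a < M \<Longrightarrow> b < M \<Longrightarrow> bij_betw (sw a b) {0..<M} {0..<M}"
  unfolding bij_betw_def
proof
  assume a: "a < M" and b: "b < M"
  show "inj_on (sw a b) {0..<M}" by (rule inj_onI) (auto simp: sw_def split: if_splits)
  show "sw a b ` {0..<M} = {0..<M}"
  proof
    show "sw a b ` {0..<M} \<subseteq> {0..<M}" using a b by (auto simp: sw_def)
    show "{0..<M} \<subseteq> sw a b ` {0..<M}"
    proof
      fix x assume "x \<in> {0..<M}"
      then have "sw a b (sw a b x) = x" "sw a b x \<in> {0..<M}" using a b by (auto simp: sw_def)
      then show "x \<in> sw a b ` {0..<M}" by (metis imageI)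
    qed
  qed
qed

lemma enat_add_fin: "(a::enat) \<noteq> \<infinity> \<Longrightarrow> b \<noteq> \<infinity> \<Longrightarrow> a + b \<noteq> \<infinity>"
  by (cases a; cases b) auto

lemma id_bij: "bij_betw id {0..<M} {0..<M}" by simp

lemma move_equiv_step: "move_step G E \<Longrightarrow> move_equiv G E"
  unfolding move_equiv_def by auto
lemma move_equiv_step': "move_step E G \<Longrightarrow> move_equiv G E"
  unfolding move_equiv_def by auto
lemma move_equiv_trans: "move_equiv G E \<Longrightarrow> move_equiv E F \<Longrightarrow> move_equiv G F"
  unfolding move_equiv_def by (rule rtranclp_trans)

lemma col_add:
  assumes w: "w < N" and s: "s < N" and ws: "w \<noteq> s"
    and sing: "\<forall>y<N. A s y = \<infinity>" and finw: "\<forall>y<N. A w y \<noteq> \<infinity>" and nzw: "\<exists>y<N. A w y \<noteq> 0"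
  shows "move_equiv (gm N A) (gm N (\<lambda>x y. if y = w then A x w + A x s else A x y))"
proof -
  define A1 where "A1 = (\<lambda>x y. if y = w then A x w + A x s else A x y)"
  define R1 where "R1 = (\<lambda>y. A w y)"
  define R2 where "R2 = (\<lambda>y::nat. \<infinity>::enat)"
  define A' where "A' = outM N s A R1 R2"
  have st1: "move_step (gm N A) (gm (Suc N) A')"
  proof (rule out_step[OF s _ _ _ _ id_bij])
    show "\<forall>y<N. A s y = R1 y + R2 y" using sing by (simp add: R2_def)
    show "(\<forall>y<N. R1 y \<noteq> \<infinity>) \<or> (\<forall>y<N. R2 y \<noteq> \<infinity>)" using finw by (simp add: R1_def)
    show "\<exists>y<N. R1 y \<noteq> 0" using nzw by (simp add: R1_def)
    show "\<exists>y<N. R2 y \<noteq> 0" using s by (auto simp: R2_def)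
    show "\<forall>i<Suc N. \<forall>j<Suc N. A' i j = outM N s A R1 R2 (id i) (id j)" by (simp add: A'_def)
  qed
  have st2: "move_step (gm N A1) (gm (Suc N) A')"
  proof (rule in_step[OF w _ _ _ _ _ _ sw_bij[of s "Suc N" N]])
    show "\<forall>y<N. A1 w y \<noteq> \<infinity>"
    proof (intro allI impI)
      fix y assume "y < N"
      have "A w w \<noteq> \<infinity>" "A w s \<noteq> \<infinity>" using finw w s by auto
      then have "A w w + A w s \<noteq> \<infinity>" by (rule enat_add_fin)
      then show "A1 w y \<noteq> \<infinity>" using finw \<open>y < N\<close> by (auto simp: A1_def)
    qed
    show "\<exists>y<N. A1 w y \<noteq> 0"
    proof -
      obtain y where "y < N" "A w y \<noteq> 0" using nzw by blast
      then show ?thesis by (intro exI[of _ y]) (auto simp: A1_def)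
    qed
    show "\<exists>x<N. A1 x w \<noteq> 0" using s sing w by (intro exI[of _ s]) (simp add: A1_def)
    show "\<forall>x<N. A1 x w = A x w + A x s" by (simp add: A1_def)
    show "\<exists>x<N. A x w \<noteq> 0" using s sing w by (intro exI[of _ s]) simp
    show "\<exists>x<N. A x s \<noteq> 0" using s sing by (intro exI[of _ s]) simp
    show "s < Suc N" "N < Suc N" using s by auto
    show "\<forall>i<Suc N. \<forall>j<Suc N. A' i j = inM N w A1 (\<lambda>x. A x w) (\<lambda>x. A x s) (sw s N i) (sw s N j)"
      using w s ws sing by (auto simp: A'_def A1_def outM_def inM_def Let_def sw_def R1_def R2_def)
  qed
  show ?thesis unfolding A1_def[symmetric]
    using move_equiv_trans[OF move_equiv_step[OF st1] move_equiv_step'[OF st2]] .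
qed




lemma gm_cong: "(\<And>x y. x < N \<Longrightarrow> y < N \<Longrightarrow> A x y = B x y) \<Longrightarrow> gm N A = gm N B"
  unfolding graph_of_matrix_def by (rule arg_cong[where f = "\<lambda>E. \<lparr>verts = _, edges = E, src = _, rng = _\<rparr>"]) fastforce

locale P83 =
  fixes C :: "nat mat" and n m :: nat
  assumes mn: "m < n" and m1: "1 \<le> m" and pos: "\<forall>i<m. \<forall>j<n. C $$ (i,j) \<noteq> 0"
begin

definition c :: "nat \<Rightarrow> nat \<Rightarrow> nat" where "c x y = C $$ (x,y)"
definition d :: "nat \<Rightarrow> nat" where "d x = (if x = 0 then 1 else 0) + c x 0 + 2 * c x m"

lemma cpos: "x < m \<Longrightarrow> y < n \<Longrightarrow> c x y \<ge> 1"
  using pos by (auto simp: c_def Suc_le_eq)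

lemma d0: "d 0 \<ge> 4" using cpos[of 0 0] cpos[of 0 m] m1 mn by (simp add: d_def)
lemma dx: "x < m \<Longrightarrow> d x \<ge> 3" using cpos[of x 0] cpos[of x m] mn by (simp add: d_def)

definition A0 where "A0 x y = (if x < m then enat ((if x = y then 1 else 0) + c x y) else \<infinity>)"
definition A1 where "A1 x y = (if x < m then enat (if y = 0 then (if x = 0 then 1 else 0) + c x 0 + c x m
   else (if x = y then 1 else 0) + c x y) else \<infinity>)"
definition A2 where "A2 x y = (if x < m then enat (if y = 0 then d x else (if x = y then 1 else 0) + c x y) else \<infinity>)"

lemma start: "graph_of_matrix n (\<lambda>i j. Jmat n m i j + enat (C $$ (i, j))) = gm n A0"
  by (rule gm_cong) (auto simp: A0_def Jmat_def c_def one_enat_def zero_enat_def)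

lemma step1: "move_equiv (gm n A0) (gm n A1)"
proof -
  have "move_equiv (gm n A0) (gm n (\<lambda>x y. if y = 0 then A0 x 0 + A0 x m else A0 x y))"
  proof (rule col_add)
    show "\<exists>y<n. A0 0 y \<noteq> 0" using mn m1 by (intro exI[of _ 0]) (auto simp: A0_def zero_enat_def)
  qed (use mn m1 in \<open>auto simp: A0_def\<close>)
  moreover have "gm n (\<lambda>x y. if y = 0 then A0 x 0 + A0 x m else A0 x y) = gm n A1"
    by (rule gm_cong) (use mn m1 in \<open>auto simp: A0_def A1_def\<close>)
  ultimately show ?thesis by simp
qed

lemma step2: "move_equiv (gm n A1) (gm n A2)"
proof -
  have "move_equiv (gm n A1) (gm n (\<lambda>x y. if y = 0 then A1 x 0 + A1 x m else A1 x y))"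
  proof (rule col_add)
    show "\<exists>y<n. A1 0 y \<noteq> 0" using mn m1 by (intro exI[of _ 0]) (auto simp: A1_def zero_enat_def)
  qed (use mn m1 in \<open>auto simp: A1_def\<close>)
  moreover have "gm n (\<lambda>x y. if y = 0 then A1 x 0 + A1 x m else A1 x y) = gm n A2"
    by (rule gm_cong) (use mn m1 in \<open>auto simp: A1_def A2_def d_def\<close>)
  ultimately show ?thesis by simp
qed

definition C1a where "C1a x = (if x < m then enat 1 else \<infinity>)"
definition C2a where "C2a x = (if x < m then enat (d x - 1) else \<infinity>)"
definition A3 where "A3 = inM n 0 A2 C1a C2a"
definition C1b where "C1b x = (if x < m \<or> x = n then enat 1 else \<infinity>)"
definition C2b where "C2b x = (if x < m then enat (d x - 2) else if x = n then enat (d 0 - 2) else \<infinity>)"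
definition A4 where "A4 = inM (Suc n) n A3 C1b C2b"
definition tau where "tau j = (if j = n then Suc n else j)"
definition A5 where "A5 i j = (if i = 0 then A4 0 (tau j) + A4 n (tau j) else A4 (tau i) (tau j))"

lemma step3: "move_step (gm n A2) (gm (Suc n) A3)"
proof (rule in_step[OF _ _ _ _ _ _ _ id_bij])
  show "0 < n" using mn by simp
  show "\<forall>y<n. A2 0 y \<noteq> \<infinity>" using m1 by (simp add: A2_def)
  show "\<exists>y<n. A2 0 y \<noteq> 0" using m1 mn d0 by (intro exI[of _ 0]) (auto simp: A2_def zero_enat_def)
  show "\<exists>x<n. A2 x 0 \<noteq> 0" using mn by (intro exI[of _ m]) (auto simp: A2_def)
  show "\<forall>x<n. A2 x 0 = C1a x + C2a x"
  proof (intro allI impI)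
    fix x assume "x < n"
    show "A2 x 0 = C1a x + C2a x"
    proof (cases "x < m")
      case True then show ?thesis using dx[OF True] by (simp add: A2_def C1a_def C2a_def)
    qed (simp add: A2_def C1a_def C2a_def)
  qed
  show "\<exists>x<n. C1a x \<noteq> 0" using m1 mn by (intro exI[of _ 0]) (auto simp: C1a_def zero_enat_def)
  show "\<exists>x<n. C2a x \<noteq> 0" using mn by (intro exI[of _ m]) (auto simp: C2a_def)
  show "\<forall>i<Suc n. \<forall>j<Suc n. A3 i j = inM n 0 A2 C1a C2a (id i) (id j)" by (simp add: A3_def)
qed

lemma step4: "move_step (gm (Suc n) A3) (gm (Suc (Suc n)) A4)"
proof (rule in_step[OF _ _ _ _ _ _ _ id_bij])
  show "n < Suc n" by simp
  show "\<forall>y<Suc n. A3 n y \<noteq> \<infinity>" using m1 by (simp add: A3_def inM_def A2_def C1a_def C2a_def)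
  show "\<exists>y<Suc n. A3 n y \<noteq> 0" using m1 mn by (intro exI[of _ 0]) (auto simp: A3_def inM_def C1a_def zero_enat_def)
  show "\<exists>x<Suc n. A3 x n \<noteq> 0" using mn by (intro exI[of _ m]) (auto simp: A3_def inM_def C2a_def)
  show "\<forall>x<Suc n. A3 x n = C1b x + C2b x"
  proof (intro allI impI)
    fix x assume x: "x < Suc n"
    consider "x < m" | "x = n" | "m \<le> x \<and> x < n" using x by linarith
    then show "A3 x n = C1b x + C2b x"
    proof cases
      case 1 then show ?thesis using dx[OF 1] mn by (simp add: A3_def inM_def C1b_def C2b_def C2a_def)
    next
      case 2 then show ?thesis using d0 mn m1 by (simp add: A3_def inM_def C1b_def C2b_def C2a_def)
    next
      case 3 then show ?thesis using mn by (simp add: A3_def inM_def C1b_def C2b_def C2a_def)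
    qed
  qed
  show "\<exists>x<Suc n. C1b x \<noteq> 0" using m1 mn by (intro exI[of _ 0]) (auto simp: C1b_def zero_enat_def)
  show "\<exists>x<Suc n. C2b x \<noteq> 0" using mn by (intro exI[of _ m]) (auto simp: C2b_def)
  show "\<forall>i<Suc (Suc n). \<forall>j<Suc (Suc n). A4 i j = inM (Suc n) n A3 C1b C2b (id i) (id j)" by (simp add: A4_def)
qed

definition A5c where "A5c i j =
  (if i = 0 then (if j = 0 then 2 else if j = n then enat (2*(d 0 - 2)) else enat (2 * c 0 j))
   else if i < m then (if j = 0 then 1 else if j = n then enat (d i - 2) else enat ((if i = j then 1 else 0) + c i j))
   else if i < n then \<infinity>
   else (if j = 0 then 1 else if j = n then enat (d 0 - 2) else enat (c 0 j)))"

lemma A5_closed: "i < Suc n \<Longrightarrow> j < Suc n \<Longrightarrow> A5 i j = A5c i j"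
  using mn m1
  by (auto simp: A5_def A5c_def A4_def A3_def inM_def tau_def C1a_def C2a_def C1b_def C2b_def A2_def
      one_enat_def numeral_eq_enat mult_2)

definition R1a where "R1a y = A4 0 (tau y)"
definition R2a where "R2a y = A4 n (tau y)"

lemma step5: "move_step (gm (Suc n) A5) (gm (Suc (Suc n)) A4)"
proof (rule out_step[OF _ _ _ _ _ sw_bij[of n "Suc (Suc n)" "Suc n"]])
  show "0 < Suc n" by simp
  show "\<forall>y<Suc n. A5 0 y = R1a y + R2a y" by (simp add: A5_def R1a_def R2a_def)
  show "(\<forall>y<Suc n. R1a y \<noteq> \<infinity>) \<or> (\<forall>y<Suc n. R2a y \<noteq> \<infinity>)"
    using m1 by (simp add: R1a_def A4_def A3_def inM_def tau_def C1a_def C2a_def C1b_def C2b_def A2_def)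
  show "\<exists>y<Suc n. R1a y \<noteq> 0" using m1 mn
    by (intro exI[of _ 0]) (auto simp: R1a_def A4_def A3_def inM_def tau_def C1a_def zero_enat_def)
  show "\<exists>y<Suc n. R2a y \<noteq> 0" using m1 mn
    by (intro exI[of _ 0]) (auto simp: R2a_def A4_def A3_def inM_def tau_def C1a_def zero_enat_def)
  show "n < Suc (Suc n)" "Suc n < Suc (Suc n)" by auto
  show "\<forall>i<Suc (Suc n). \<forall>j<Suc (Suc n). A4 i j = outM (Suc n) 0 A5 R1a R2a (sw n (Suc n) i) (sw n (Suc n) j)"
    using mn m1
    by (auto simp: outM_def Let_def sw_def A5_def R1a_def R2a_def A4_def A3_def inM_def tau_def
       C1a_def C2a_def C1b_def C2b_def A2_def)
qed

definition rho where "rho y = (if y = 0 then enat 1 else if y = n then enat (d 0 - 3)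
   else if y = m then enat (c 0 m + 1) else enat (c 0 y))"
definition tauF where "tauF k = (if k < m then k else if k = m then n else if k = Suc m then m
   else if k = Suc (Suc m) then Suc n else k - 2)"
definition F where "F k l = outM (Suc n) m A5 rho (\<lambda>_. \<infinity>) (tauF k) (tauF l)"

lemma tauF_lt: "k < Suc (Suc n) \<Longrightarrow> tauF k < Suc (Suc n)"
  using mn by (auto simp: tauF_def)

lemma tauF_inj: "inj_on tauF {0..<Suc (Suc n)}"
  using mn by (intro inj_onI) (auto simp: tauF_def split: if_splits)

lemma tauF_bij: "bij_betw tauF {0..<Suc (Suc n)} {0..<Suc (Suc n)}"
proof -
  have "tauF ` {0..<Suc (Suc n)} = {0..<Suc (Suc n)}"
    by (rule endo_inj_surj[OF _ _ tauF_inj]) (use tauF_lt in auto)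
  then show ?thesis unfolding bij_betw_def using tauF_inj by auto
qed

lemma step6: "move_step (gm (Suc n) A5) (gm (Suc (Suc n)) F)"
proof (rule out_step[OF _ _ _ _ _ tauF_bij])
  show "m < Suc n" using mn by simp
  show "\<forall>y<Suc n. A5 m y = rho y + \<infinity>" using mn m1 by (simp add: A5_closed A5c_def)
  show "(\<forall>y<Suc n. rho y \<noteq> \<infinity>) \<or> (\<forall>y<Suc n. (\<infinity>::enat) \<noteq> \<infinity>)" by (simp add: rho_def)
  show "\<exists>y<Suc n. rho y \<noteq> 0" by (intro exI[of _ 0]) (auto simp: rho_def zero_enat_def)
  show "\<exists>y<Suc n. (\<infinity>::enat) \<noteq> 0" by auto
  show "\<forall>i<Suc (Suc n). \<forall>j<Suc (Suc n). F i j = outM (Suc n) m A5 rho (\<lambda>_. \<infinity>) (tauF i) (tauF j)"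
    by (simp add: F_def)
qed

definition og where "og l = (if tauF l = Suc n then m else tauF l)"

lemma og_lt: "l < Suc (Suc n) \<Longrightarrow> og l < Suc n"
  using tauF_lt[of l] mn by (auto simp: og_def)

lemma og_eq: "l < Suc (Suc n) \<Longrightarrow> og l = (if l < m then l else if l = m then n else if l \<le> Suc (Suc m) then m else l - 2)"
  using mn by (auto simp: og_def tauF_def)

lemma F_row_reg: "k < m \<Longrightarrow> l < Suc (Suc n) \<Longrightarrow> F k l = A5c k (og l)"
  using og_lt[of l] mn by (auto simp: F_def outM_def Let_def A5_closed og_def tauF_def)

lemma F_row_h: "l < Suc (Suc n) \<Longrightarrow> F m l = A5c n (og l)"
  using og_lt[of l] mn by (auto simp: F_def outM_def Let_def A5_closed og_def tauF_def)

lemma F_row_p: "l < Suc (Suc n) \<Longrightarrow> F (Suc m) l = rho (og l)"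
  using og_lt[of l] mn by (auto simp: F_def outM_def Let_def og_def tauF_def)

lemma F_row_sing: "Suc (Suc m) \<le> k \<Longrightarrow> k < Suc (Suc n) \<Longrightarrow> l < Suc (Suc n) \<Longrightarrow> F k l = \<infinity>"
  using og_lt[of l] mn by (auto simp: F_def outM_def Let_def A5_closed A5c_def tauF_def)

lemma c0: "y < n \<Longrightarrow> c 0 y \<ge> 1" using cpos[of 0 y] m1 by simp

lemma F1: assumes k: "k < m + 2" and l: "l < n + 2"
  shows "\<exists>v. F k l = enat v \<and> v \<ge> 1 + (if k = l then 1 else 0)"
proof -
  have l': "l < Suc (Suc n)" using l by simp
  have ogl: "og l < Suc n" using og_lt[OF l'] .
  have oge: "og l = (if l < m then l else if l = m then n else if l \<le> Suc (Suc m) then m else l - 2)"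
    using og_eq[OF l'] .
  consider "k < m" | "k = m" | "k = Suc m" using k by linarith
  then show ?thesis
  proof cases
    case 1
    show ?thesis
    proof (cases "k = 0")
      case True
      then show ?thesis using F_row_reg[OF 1 l'] oge ogl d0 c0[of "og l"] mn
        by (auto simp: A5c_def numeral_eq_enat)
    next
      case False
      then show ?thesis using F_row_reg[OF 1 l'] oge ogl dx[OF 1] cpos[OF 1, of "og l"] mn 1
        by (auto simp: A5c_def one_enat_def)
    qed
  next
    case 2
    then show ?thesis using F_row_h[OF l'] oge ogl d0 c0[of "og l"] mn m1
      by (auto simp: A5c_def one_enat_def)
  next
    case 3
    then show ?thesis using F_row_p[OF l'] oge ogl d0 c0[of "og l"] c0[of m] mn m1
      by (auto simp: rho_def)
  qed
qed

lemma F3: assumes k: "k < m + 2" shows "F k 0 = enat (1 + (if k = 0 then 1 else 0))"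
proof -
  have o0: "og 0 = 0" using og_eq[of 0] m1 by simp
  consider "k < m" | "k = m" | "k = Suc m" using k by linarith
  then show ?thesis
  proof cases
    case 1 then show ?thesis using F_row_reg[OF 1, of 0] o0 by (auto simp: A5c_def numeral_eq_enat one_enat_def)
  next
    case 2 then show ?thesis using F_row_h[of 0] o0 mn m1 by (auto simp: A5c_def one_enat_def)
  next
    case 3 then show ?thesis using F_row_p[of 0] o0 mn m1 by (auto simp: rho_def)
  qed
qed

lemma F4: assumes l: "l < m + 2"
  shows "int (the_enat (F m l)) - (if m = l then 1 else 0) = int (the_enat (F (Suc m) l)) - (if Suc m = l then 1 else 0)"
proof -
  have l': "l < Suc (Suc n)" using l mn by simp
  have oge: "og l = (if l < m then l else if l = m then n else if l \<le> Suc (Suc m) then m else l - 2)"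
    using og_eq[OF l'] .
  show ?thesis using F_row_h[OF l'] F_row_p[OF l'] oge d0 mn m1 l
    by (auto simp: A5c_def rho_def one_enat_def)
qed

definition D :: "int mat" where
  "D = mat (n + 2) (n + 2) (\<lambda>(i,l). if i < m + 2 then int (the_enat (F i l)) - (if i = l then 1 else 0) else 0)"

lemma final_gm: "gm (Suc (Suc n)) F = gm (n + 2) (\<lambda>i j. Jmat (n + 2) (m + 2) i j + enat (nat (D $$ (i, j))))"
proof -
  have "F i j = Jmat (n + 2) (m + 2) i j + enat (nat (D $$ (i, j)))" if ij: "i < n + 2" "j < n + 2" for i j
  proof (cases "i < m + 2")
    case True
    obtain v where v: "F i j = enat v" "v \<ge> 1 + (if i = j then 1 else 0)" using F1[OF True ij(2)] by blast
    show ?thesis using True ij v by (auto simp: D_def Jmat_def one_enat_def)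
  next
    case False
    then show ?thesis using ij F_row_sing[of i j] by (auto simp: D_def Jmat_def)
  qed
  then have "gm (n + 2) F = gm (n + 2) (\<lambda>i j. Jmat (n + 2) (m + 2) i j + enat (nat (D $$ (i, j))))"
    by (intro gm_cong) auto
  moreover have "n + 2 = Suc (Suc n)" by simp
  ultimately show ?thesis by metis
qed

lemma main:
  "D \<in> carrier_mat (n + 2) (n + 2) \<and>
    (\<forall>i. m + 2 \<le> i \<and> i < n + 2 \<longrightarrow> (\<forall>l<n + 2. D $$ (i, l) = 0)) \<and>
    (\<forall>i<m + 2. \<forall>l<n + 2. D $$ (i, l) > 0) \<and>
    (\<forall>i<m + 2. D $$ (i, 0) = 1) \<and>
    det (mat (m + 2) (m + 2) (\<lambda>(i, l). D $$ (i, l))) = 0 \<and>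
    move_equiv
      (graph_of_matrix n (\<lambda>i j. Jmat n m i j + enat (C $$ (i, j))))
      (graph_of_matrix (n + 2) (\<lambda>i j. Jmat (n + 2) (m + 2) i j + enat (nat (D $$ (i, j)))))"
proof (intro conjI allI impI)
  show "D \<in> carrier_mat (n + 2) (n + 2)" by (simp add: D_def)
  show "D $$ (i, l) = 0" if "m + 2 \<le> i \<and> i < n + 2" "l < n + 2" for i l
    using that by (simp add: D_def)
  show "D $$ (i, l) > 0" if il: "i < m + 2" "l < n + 2" for i l
  proof -
    obtain v where v: "F i l = enat v" "v \<ge> 1 + (if i = l then 1 else 0)" using F1[OF il] by blast
    have "i < n + 2" using il mn by simp
    then show ?thesis using il v by (auto simp: D_def)
  qed
  show "D $$ (i, 0) = 1" if "i < m + 2" for i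
    using that F3[OF that] mn by (auto simp: D_def)
  show "det (mat (m + 2) (m + 2) (\<lambda>(i, l). D $$ (i, l))) = 0"
  proof (rule det_identical_rows[of _ "m + 2" m "Suc m"])
    show "mat (m + 2) (m + 2) (\<lambda>(i, l). D $$ (i, l)) \<in> carrier_mat (m + 2) (m + 2)" by simp
    show "m \<noteq> Suc m" "m < m + 2" "Suc m < m + 2" by auto
    show "row (mat (m + 2) (m + 2) (\<lambda>(i, l). D $$ (i, l))) m = row (mat (m + 2) (m + 2) (\<lambda>(i, l). D $$ (i, l))) (Suc m)"
    proof (rule eq_vecI)
      fix l assume "l < dim_vec (row (mat (m + 2) (m + 2) (\<lambda>(i, l). D $$ (i, l))) (Suc m))"
      then have l: "l < m + 2" by simp
      then have "l < n + 2" using mn by simp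
      then show "row (mat (m + 2) (m + 2) (\<lambda>(i, l). D $$ (i, l))) m $ l = row (mat (m + 2) (m + 2) (\<lambda>(i, l). D $$ (i, l))) (Suc m) $ l"
        using F4[OF l] l mn by (simp add: D_def)
    qed simp
  qed
  show "move_equiv (graph_of_matrix n (\<lambda>i j. Jmat n m i j + enat (C $$ (i, j))))
      (graph_of_matrix (n + 2) (\<lambda>i j. Jmat (n + 2) (m + 2) i j + enat (nat (D $$ (i, j)))))"
    unfolding start final_gm[symmetric]
    by (rule move_equiv_trans[OF step1 move_equiv_trans[OF step2 move_equiv_trans[OF move_equiv_step[OF step3]
        move_equiv_trans[OF move_equiv_step[OF step4] move_equiv_trans[OF move_equiv_step'[OF step5] move_equiv_step[OF step6]]]]]])
qed

end

theorem proposition8p3: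
  fixes C :: "nat mat" and n m :: nat
  assumes "C \<in> carrier_mat n n"
    and "m \<le> n" and "m \<noteq> n"
    and "\<forall>i<m. \<forall>j<n. C $$ (i, j) \<noteq> 0"
    and "\<forall>i. m \<le> i \<and> i < n \<longrightarrow> (\<forall>j<n. C $$ (i, j) = 0)"
    and "\<exists>i<n. \<exists>j<n. C $$ (i, j) = 1"
  shows "\<exists>D :: int mat. D \<in> carrier_mat (n + 2) (n + 2) \<and>
    (\<forall>i. m + 2 \<le> i \<and> i < n + 2 \<longrightarrow> (\<forall>l<n + 2. D $$ (i, l) = 0)) \<and>
    (\<forall>i<m + 2. \<forall>l<n + 2. D $$ (i, l) > 0) \<and>
    (\<forall>i<m + 2. D $$ (i, 0) = 1) \<and>
    det (mat (m + 2) (m + 2) (\<lambda>(i, l). D $$ (i, l))) = 0 \<and>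
    move_equiv
      (graph_of_matrix n (\<lambda>i j. Jmat n m i j + enat (C $$ (i, j))))
      (graph_of_matrix (n + 2) (\<lambda>i j. Jmat (n + 2) (m + 2) i j + enat (nat (D $$ (i, j)))))"
proof -
  have mn: "m < n" using assms(2,3) by simp
  obtain i j where ij: "i < n" "j < n" "C $$ (i, j) = 1" using assms(6) by blast
  have "i < m" using assms(5) ij by (metis not_less one_neq_zero)
  then have m1: "1 \<le> m" by simp
  interpret P83 C n m using mn m1 assms(4) by unfold_locales auto
  show ?thesis using main by blast
qed

end
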